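(* $N\otimes-$ is a functor on $\mathsf{SquaMS}$: for every square metric space $X$, the quotient distance on $N\otimes X$ is a metric, $(N\otimes X,S_{N\otimes X})$ is a square metric space, and for every morphism $f$ of $\mathsf{SquaMS}$, $N\otimes f$ is a morphism of $\mathsf{SquaMS}$, with identities and composition preserved.
   Context: Let $M_0=\{(r,s)\in[0,1]^2: r\in\{0,1\}\text{ or } s\in\{0,1\}\}$. A square metric space is a pair $(X,S_X)$ with $X$ a metric space with all distances at most $2$ and $S_X\colon M_0\to X$ injective such that (sq1) for $i\in\{0,1\}$, $r,s\in[0,1]$: $d_X(S_X(i,r),S_X(i,s))=|s-r|$ and $d_X(S_X(r,i),S_X(s,i))=|s-r|$; (sq2) $d_X(S_X(r,s),S_X(t,u))\ge|r-t|+|s-u|$. $\mathsf{SquaMS}$: these objects, with short maps $f$ satisfying $f\circ S_X=S_Y$ as morphisms. Let $N=\{0,1,2\}^2$, also viewed as points of $\mathbb{R}^2$. For $X$ in $\mathsf{SquaMS}$, $N\otimes X=(N\times X)/\!\sim$, where $\sim$ is the equivalence relation generated by $(m,S_X(p))\sim(n,S_X(q))$ whenever $m,n\in N$ differ by exactly $1$ in exactly one coordinate and $(m+p)/3=(n+q)/3$ in $\mathbb{R}^2$; $n\otimes x$ is the class of $(n,x)$. On $N\times X$ put $d((a,u),(b,v))=\frac13 d_X(u,v)$ if $a=b$ and $2$ otherwise; the quotient distance is the infimum over finite sequences from $(m,x)$ to $(n,y)$ in $N\times X$ of the sum over consecutive pairs of $0$ if $\sim$-related and the distance otherwise. $S_{N\otimes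 X}(p)=n\otimes S_X(3p-n)$ for any $n\in N$ with $p\in(n+[0,1]^2)/3$, and $(N\otimes f)(n\otimes x)=n\otimes f(x)$. *)

theory Defs
  imports "HOL-Analysis.Analysis"
begin

definition M0 :: "(real \<times> real) set" where
  "M0 = {(r, s). r \<in> {0..1} \<and> s \<in> {0..1} \<and> (r \<in> {0, 1} \<or> s \<in> {0, 1})}"

definition square_ms :: "'a set \<Rightarrow> ('a \<Rightarrow> 'a \<Rightarrow> real) \<Rightarrow> (real \<times> real \<Rightarrow> 'a) \<Rightarrow> bool" where
  "square_ms X d S \<longleftrightarrow>
     Metric_space X d \<and> (\<forall>x\<in>X. \<forall>y\<in>X. d x y \<le> 2) \<and>
     S ` M0 \<subseteq> X \<and> inj_on S M0 \<and>
     (\<forall>i\<in>{0, 1}. \<forall>r\<in>{0..1}. \<forall>s\<in>{0..1}.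
        d (S (i, r)) (S (i, s)) = \<bar>s - r\<bar> \<and> d (S (r, i)) (S (s, i)) = \<bar>s - r\<bar>) \<and>
     (\<forall>p\<in>M0. \<forall>q\<in>M0. d (S p) (S q) \<ge> \<bar>fst p - fst q\<bar> + \<bar>snd p - snd q\<bar>)"

definition sqms_mor ::
  "'a set \<Rightarrow> ('a \<Rightarrow> 'a \<Rightarrow> real) \<Rightarrow> (real \<times> real \<Rightarrow> 'a) \<Rightarrow>
   'b set \<Rightarrow> ('b \<Rightarrow> 'b \<Rightarrow> real) \<Rightarrow> (real \<times> real \<Rightarrow> 'b) \<Rightarrow> ('a \<Rightarrow> 'b) \<Rightarrow> bool" where
  "sqms_mor X d S Y e T f \<longleftrightarrow>
     f ` X \<subseteq> Y \<and> (\<forall>x\<in>X. \<forall>y\<in>X. e (f x) (f y) \<le> d x y) \<and> (\<forall>p\<in>M0. f (S p) = T p)"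

definition NN :: "(int \<times> int) set" where
  "NN = {0, 1, 2} \<times> {0, 1, 2}"

definition adj :: "int \<times> int \<Rightarrow> int \<times> int \<Rightarrow> bool" where
  "adj m n \<longleftrightarrow> (fst m = fst n \<and> \<bar>snd m - snd n\<bar> = 1) \<or> (snd m = snd n \<and> \<bar>fst m - fst n\<bar> = 1)"

definition tgen :: "(real \<times> real \<Rightarrow> 'a) \<Rightarrow> ((int \<times> int) \<times> 'a) rel" where
  "tgen S = {((m, S p), (n, S q)) | m n p q.
      m \<in> NN \<and> n \<in> NN \<and> adj m n \<and> p \<in> M0 \<and> q \<in> M0 \<and>
      real_of_int (fst m) + fst p = real_of_int (fst n) + fst q \<and>
      real_of_int (snd m) + snd p = real_of_int (snd n) + snd q}"

definition teq :: "'a set \<Rightarrow> (real \<times> real \<Rightarrow> 'a) \<Rightarrow> ((int \<times> int) \<times> 'a) rel" where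
  "teq X S = {(u, v). u \<in> NN \<times> X \<and> v \<in> NN \<times> X \<and> (u, v) \<in> (tgen S \<union> (tgen S)\<inverse>)\<^sup>*}"

text \<open>Carrier of N \<otimes> X and the class n \<otimes> x.\<close>
definition tensor :: "'a set \<Rightarrow> (real \<times> real \<Rightarrow> 'a) \<Rightarrow> ((int \<times> int) \<times> 'a) set set" where
  "tensor X S = (NN \<times> X) // teq X S"

definition tclass :: "'a set \<Rightarrow> (real \<times> real \<Rightarrow> 'a) \<Rightarrow> (int \<times> int) \<times> 'a \<Rightarrow> ((int \<times> int) \<times> 'a) set" where
  "tclass X S a = teq X S `` {a}"

definition tstep :: "'a set \<Rightarrow> ('a \<Rightarrow> 'a \<Rightarrow> real) \<Rightarrow> (real \<times> real \<Rightarrow> 'a) \<Rightarrow>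
    (int \<times> int) \<times> 'a \<Rightarrow> (int \<times> int) \<times> 'a \<Rightarrow> real" where
  "tstep X d S u v =
     (if (u, v) \<in> teq X S then 0 else if fst u = fst v then d (snd u) (snd v) / 3 else 2)"

definition tcost :: "'a set \<Rightarrow> ('a \<Rightarrow> 'a \<Rightarrow> real) \<Rightarrow> (real \<times> real \<Rightarrow> 'a) \<Rightarrow>
    ((int \<times> int) \<times> 'a) list \<Rightarrow> real" where
  "tcost X d S zs = (\<Sum>i < length zs - 1. tstep X d S (zs ! i) (zs ! Suc i))"

definition qd :: "'a set \<Rightarrow> ('a \<Rightarrow> 'a \<Rightarrow> real) \<Rightarrow> (real \<times> real \<Rightarrow> 'a) \<Rightarrow>
    (int \<times> int) \<times> 'a \<Rightarrow> (int \<times> int) \<times> 'a \<Rightarrow> real" where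
  "qd X d S a b = Inf {tcost X d S zs | zs. zs \<noteq> [] \<and> hd zs = a \<and> last zs = b \<and> set zs \<subseteq> NN \<times> X}"

text \<open>Induced distance on classes (set to 0 outside the carrier, a HOL totality convention).\<close>
definition tensor_dist :: "'a set \<Rightarrow> ('a \<Rightarrow> 'a \<Rightarrow> real) \<Rightarrow> (real \<times> real \<Rightarrow> 'a) \<Rightarrow>
    ((int \<times> int) \<times> 'a) set \<Rightarrow> ((int \<times> int) \<times> 'a) set \<Rightarrow> real" where
  "tensor_dist X d S A B =
     (if A \<in> tensor X S \<and> B \<in> tensor X S
      then Inf {qd X d S a b | a b. a \<in> A \<and> b \<in> B} else 0)"

definition tensor_S :: "'a set \<Rightarrow> (real \<times> real \<Rightarrow> 'a) \<Rightarrow> real \<times> real \<Rightarrow> ((int \<times> int) \<times> 'a) set" where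
  "tensor_S X S p =
     (let n = (SOME n. n \<in> NN \<and>
                 3 * fst p - real_of_int (fst n) \<in> {0..1} \<and>
                 3 * snd p - real_of_int (snd n) \<in> {0..1})
      in tclass X S (n, S (3 * fst p - real_of_int (fst n), 3 * snd p - real_of_int (snd n))))"

definition tensor_map :: "'b set \<Rightarrow> (real \<times> real \<Rightarrow> 'b) \<Rightarrow> ('a \<Rightarrow> 'b) \<Rightarrow>
    ((int \<times> int) \<times> 'a) set \<Rightarrow> ((int \<times> int) \<times> 'b) set" where
  "tensor_map Y T f A = (let a = (SOME a. a \<in> A) in tclass Y T (fst a, f (snd a)))"

end

theory Submission
  imports Defs
begin


lemma tcost_Nil[simp]: "tcost X d S [] = 0" by (simp add: tcost_def)
lemma tcost_single[simp]: "tcost X d S [x] = 0" by (simp add: tcost_def)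
lemma tcost_Cons2[simp]: "tcost X d S (x # y # zs) = tstep X d S x y + tcost X d S (y # zs)"
  unfolding tcost_def by (simp add: sum.lessThan_Suc_shift del: sum.lessThan_Suc)

definition geq :: "int \<times> int \<Rightarrow> real \<times> real \<Rightarrow> int \<times> int \<Rightarrow> real \<times> real \<Rightarrow> bool" where
  "geq m p n q \<longleftrightarrow> real_of_int (fst m) + fst p = real_of_int (fst n) + fst q \<and>
     real_of_int (snd m) + snd p = real_of_int (snd n) + snd q"

lemma M0_iff: "p \<in> M0 \<longleftrightarrow> (0 \<le> fst p \<and> fst p \<le> 1 \<and> 0 \<le> snd p \<and> snd p \<le> 1 \<and>
   (fst p = 0 \<or> fst p = 1 \<or> snd p = 0 \<or> snd p = 1))"
  by (cases p) (auto simp: M0_def)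

lemma NN_iff: "n \<in> NN \<longleftrightarrow> fst n \<in> {0,1,2} \<and> snd n \<in> {0,1,2}"
  by (cases n) (auto simp: NN_def)

lemma split_thirds:
  assumes MS: "Metric_space M D"
    and inM: "\<And>t. t \<in> {0..1} \<Longrightarrow> \<phi> t \<in> M"
    and loc: "\<And>r s k. r \<in> {0..1} \<Longrightarrow> s \<in> {0..1} \<Longrightarrow> k \<in> {0,1,2::int} \<Longrightarrow>
       real_of_int k \<le> 3 * r \<Longrightarrow> 3 * r \<le> real_of_int k + 1 \<Longrightarrow>
       real_of_int k \<le> 3 * s \<Longrightarrow> 3 * s \<le> real_of_int k + 1 \<Longrightarrow> D (\<phi> r) (\<phi> s) \<le> \<bar>s - r\<bar>"
    and r: "r \<in> {0..1}" and s: "s \<in> {0..1}"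
  shows "D (\<phi> r) (\<phi> s) \<le> \<bar>s - r\<bar>"
proof -
  have same: "D (\<phi> x) (\<phi> y) \<le> y - x" if "x \<le> y" "x \<in> {0..1}" "y \<in> {0..1}"
     and h4: "x = y \<or> (y \<le> 1/3) \<or> (1/3 \<le> x \<and> y \<le> 2/3) \<or> 2/3 \<le> x" for x y
  proof -
    consider "x = y" | "y \<le> 1/3" | "1/3 \<le> x \<and> y \<le> 2/3" | "2/3 \<le> x" using h4 by blast
    then show ?thesis
    proof cases
      case 1 then show ?thesis using Metric_space.zero[OF MS, of "\<phi> y" "\<phi> y"] inM[of y] that(3) by simp
    next
      case 2 then show ?thesis using loc[of x y 0] that by auto
    next
      case 3 then show ?thesis using loc[of x y 1] that by auto
    next
      case 4 then show ?thesis using loc[of x y 2] that by auto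
    qed
  qed
  have main: "D (\<phi> r) (\<phi> s) \<le> s - r" if "r \<le> s" "r \<in> {0..1}" "s \<in> {0..1}" for r s
  proof -
    define t1 where "t1 = max r (min s (1/3))"
    define t2 where "t2 = max r (min s (2/3))"
    have b: "r \<le> t1" "t1 \<le> t2" "t2 \<le> s" using that unfolding t1_def t2_def by auto
    have t01: "t1 \<in> {0..1}" "t2 \<in> {0..1}" using that b by auto
    have "D (\<phi> r) (\<phi> s) \<le> D (\<phi> r) (\<phi> t1) + D (\<phi> t1) (\<phi> s)"
      using Metric_space.triangle[OF MS] inM that t01 by blast
    also have "D (\<phi> t1) (\<phi> s) \<le> D (\<phi> t1) (\<phi> t2) + D (\<phi> t2) (\<phi> s)"
      using Metric_space.triangle[OF MS] inM that t01 by blast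
    also have "D (\<phi> r) (\<phi> t1) \<le> t1 - r"
      by (rule same) (use b that t01 in \<open>auto simp: t1_def max_def min_def\<close>)
    also have "D (\<phi> t1) (\<phi> t2) \<le> t2 - t1"
      by (rule same) (use b that t01 in \<open>auto simp: t1_def t2_def max_def min_def\<close>)
    also have "D (\<phi> t2) (\<phi> s) \<le> s - t2"
      by (rule same) (use b that t01 in \<open>auto simp: t2_def max_def min_def\<close>)
    finally show ?thesis by linarith
  qed
  show ?thesis
  proof (cases "r \<le> s")
    case True then show ?thesis using main[OF True r s] by simp
  next
    case False then show ?thesis using main[of s r] r s Metric_space.commute[OF MS] by simp
  qed
qed

locale sqms =
  fixes X :: "'a set" and d :: "'a \<Rightarrow> 'a \<Rightarrow> real" and S :: "real \<times> real \<Rightarrow> 'a"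
  assumes sq: "square_ms X d S"
begin

lemma ms: "Metric_space X d" using sq by (simp add: square_ms_def)
lemma dle2: "x \<in> X \<Longrightarrow> y \<in> X \<Longrightarrow> d x y \<le> 2" using sq by (simp add: square_ms_def)
lemma SX: "p \<in> M0 \<Longrightarrow> S p \<in> X" using sq by (auto simp: square_ms_def)
lemma Sinj: "p \<in> M0 \<Longrightarrow> q \<in> M0 \<Longrightarrow> S p = S q \<Longrightarrow> p = q"
  using sq by (auto simp: square_ms_def inj_on_def)
lemma sq1a: "i \<in> {0,1} \<Longrightarrow> r \<in> {0..1} \<Longrightarrow> s \<in> {0..1} \<Longrightarrow> d (S (i,r)) (S (i,s)) = \<bar>s-r\<bar>"
  using sq unfolding square_ms_def by blast
lemma sq1b: "i \<in> {0,1} \<Longrightarrow> r \<in> {0..1} \<Longrightarrow> s \<in> {0..1} \<Longrightarrow> d (S (r,i)) (S (s,i)) = \<bar>s-r\<bar>"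
  using sq unfolding square_ms_def by blast
lemma sq2: "p \<in> M0 \<Longrightarrow> q \<in> M0 \<Longrightarrow> \<bar>fst p - fst q\<bar> + \<bar>snd p - snd q\<bar> \<le> d (S p) (S q)"
  using sq unfolding square_ms_def by blast
lemma dnn[simp]: "0 \<le> d x y" using Metric_space.nonneg[OF ms] .
lemma dsym: "d x y = d y x" using Metric_space.commute[OF ms] .
lemma dzero: "x \<in> X \<Longrightarrow> y \<in> X \<Longrightarrow> d x y = 0 \<longleftrightarrow> x = y" using Metric_space.zero[OF ms] .
lemma dtri: "x \<in> X \<Longrightarrow> y \<in> X \<Longrightarrow> z \<in> X \<Longrightarrow> d x z \<le> d x y + d y z"
  using Metric_space.triangle[OF ms] .

definition bnd :: "(int \<times> int) \<times> 'a \<Rightarrow> (int \<times> int) \<times> 'a \<Rightarrow> bool" where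
  "bnd u v \<longleftrightarrow> (\<exists>m n p q. m \<in> NN \<and> n \<in> NN \<and> p \<in> M0 \<and> q \<in> M0 \<and>
      u = (m, S p) \<and> v = (n, S q) \<and> geq m p n q)"

lemma tgen_bnd: "(u, v) \<in> tgen S \<Longrightarrow> bnd u v"
  unfolding tgen_def bnd_def geq_def by blast

lemma bnd_sym: "bnd u v \<Longrightarrow> bnd v u"
  unfolding bnd_def geq_def by (metis)

lemma bnd_trans: "bnd u v \<Longrightarrow> bnd v w \<Longrightarrow> bnd u w"
proof -
  assume "bnd u v" "bnd v w"
  then obtain m n p q m' n' p' q' where h: "m \<in> NN" "n \<in> NN" "p \<in> M0" "q \<in> M0" "u = (m, S p)" "v = (n, S q)" "geq m p n q"
    "m' \<in> NN" "n' \<in> NN" "p' \<in> M0" "q' \<in> M0" "v = (m', S p')" "w = (n', S q')" "geq m' p' n' q'"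
    unfolding bnd_def by blast
  then have "q = p'" using Sinj by auto
  moreover have "n = m'" using h by auto
  ultimately show ?thesis using h unfolding bnd_def geq_def
    by (intro exI[of _ m] exI[of _ n'] exI[of _ p] exI[of _ q']) auto
qed

lemma tgen_NN: "(u, v) \<in> tgen S \<Longrightarrow> u \<in> NN \<times> X \<and> v \<in> NN \<times> X"
  unfolding tgen_def using SX by auto

lemma teq_char: "(u, v) \<in> teq X S \<Longrightarrow> u = v \<or> bnd u v"
proof -
  assume "(u, v) \<in> teq X S"
  then have "(u, v) \<in> (tgen S \<union> (tgen S)\<inverse>)\<^sup>*" by (simp add: teq_def)
  then show ?thesis
  proof (induction rule: rtrancl_induct)
    case base then show ?case by simp
  next
    case (step y z)
    have "bnd y z" using step(2) tgen_bnd bnd_sym by blast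
    then show ?case using step(3) bnd_trans by blast
  qed
qed

lemma teq_equiv: "equiv (NN \<times> X) (teq X S)"
proof (rule equivI)
  show "refl_on (NN \<times> X) (teq X S)" by (auto simp: refl_on_def teq_def)
  have "sym ((tgen S \<union> (tgen S)\<inverse>)\<^sup>*)" by (rule sym_rtrancl) (simp add: sym_Un_converse)
  then show "sym (teq X S)" unfolding teq_def sym_def by blast
  show "teq X S \<subseteq> (NN \<times> X) \<times> NN \<times> X" by (auto simp: teq_def)
  show "trans (teq X S)" unfolding teq_def trans_def by (auto intro: rtrancl_trans)
qed

lemma teq_refl: "u \<in> NN \<times> X \<Longrightarrow> (u, u) \<in> teq X S"
  unfolding teq_def by auto

lemma teq_sym: "(u, v) \<in> teq X S \<Longrightarrow> (v, u) \<in> teq X S"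
  using teq_equiv unfolding equiv_def sym_def by blast

lemma teq_trans: "(u, v) \<in> teq X S \<Longrightarrow> (v, w) \<in> teq X S \<Longrightarrow> (u, w) \<in> teq X S"
  using teq_equiv unfolding equiv_def trans_def by blast

lemma teq_NN: "(u, v) \<in> teq X S \<Longrightarrow> u \<in> NN \<times> X \<and> v \<in> NN \<times> X"
  unfolding teq_def by auto

lemma int_le1: "\<bar>real_of_int a - real_of_int b\<bar> \<le> 1 \<Longrightarrow> \<bar>a - b\<bar> \<le> 1"
proof -
  assume "\<bar>real_of_int a - real_of_int b\<bar> \<le> 1"
  then have "real_of_int \<bar>a - b\<bar> \<le> 1" by simp
  then show ?thesis by linarith
qed

lemma teq_one:
  assumes "m \<in> NN" "n \<in> NN" "p \<in> M0" "q \<in> M0" "geq m p n q"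
    and "(fst m = fst n \<and> \<bar>snd m - snd n\<bar> \<le> 1) \<or> (snd m = snd n \<and> \<bar>fst m - fst n\<bar> \<le> 1)"
  shows "((m, S p), (n, S q)) \<in> teq X S"
proof (cases "m = n")
  case True
  then have "p = q" using assms(5) unfolding geq_def by (simp add: prod_eq_iff)
  then show ?thesis using True teq_refl SX assms by auto
next
  case False
  then have "adj m n" using assms(6) unfolding adj_def by (auto simp: prod_eq_iff)
  then have "((m, S p), (n, S q)) \<in> tgen S"
    using assms unfolding tgen_def geq_def by blast
  then show ?thesis unfolding teq_def using tgen_NN by blast
qed

lemma teq_intro:
  assumes m: "m \<in> NN" and n: "n \<in> NN" and p: "p \<in> M0" and q: "q \<in> M0" and g: "geq m p n q"
  shows "((m, S p), (n, S q)) \<in> teq X S"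
proof -
  define k where "k = (fst n, snd m)"
  define r where "r = (fst q, snd p)"
  have pb: "0 \<le> fst p" "fst p \<le> 1" "0 \<le> snd p" "snd p \<le> 1" using p by (auto simp: M0_iff)
  have qb: "0 \<le> fst q" "fst q \<le> 1" "0 \<le> snd q" "snd q \<le> 1" using q by (auto simp: M0_iff)
  have d1: "\<bar>fst m - fst n\<bar> \<le> 1"
    by (rule int_le1) (use g pb qb in \<open>auto simp: geq_def\<close>)
  have d2: "\<bar>snd m - snd n\<bar> \<le> 1"
    by (rule int_le1) (use g pb qb in \<open>auto simp: geq_def\<close>)
  have kN: "k \<in> NN" using m n by (auto simp: k_def NN_iff)
  have rM: "r \<in> M0"
  proof (cases "fst m = fst n")
    case True
    then have "fst q = fst p" using g by (simp add: geq_def)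
    then show ?thesis using p by (auto simp: r_def M0_iff)
  next
    case False
    then have "fst m - fst n = 1 \<or> fst m - fst n = -1" using d1 by linarith
    then have "fst q = fst p + 1 \<or> fst q = fst p - 1"
    proof
      assume "fst m - fst n = 1"
      then have "real_of_int (fst m) = real_of_int (fst n) + 1" by simp
      then show ?thesis using g by (simp add: geq_def)
    next
      assume "fst m - fst n = -1"
      then have "real_of_int (fst m) = real_of_int (fst n) - 1" by simp
      then show ?thesis using g by (simp add: geq_def)
    qed
    then have "fst q = 0 \<or> fst q = 1" using pb qb by auto
    then show ?thesis using pb qb by (auto simp: r_def M0_iff)
  qed
  have 1: "((m, S p), (k, S r)) \<in> teq X S"
    by (rule teq_one) (use m kN p rM g d1 in \<open>auto simp: k_def r_def geq_def\<close>)
  have 2: "((k, S r), (n, S q)) \<in> teq X S"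
    by (rule teq_one) (use n kN q rM g d2 in \<open>auto simp: k_def r_def geq_def\<close>)
  show ?thesis using teq_trans[OF 1 2] .
qed

end



context sqms begin

definition chain where
  "chain a b zs \<longleftrightarrow> zs \<noteq> [] \<and> hd zs = a \<and> last zs = b \<and> set zs \<subseteq> NN \<times> X"

lemma tstep_nn: "0 \<le> tstep X d S u v" unfolding tstep_def by auto
lemma tstep_le2: "u \<in> NN \<times> X \<Longrightarrow> v \<in> NN \<times> X \<Longrightarrow> tstep X d S u v \<le> 2"
  unfolding tstep_def using dle2[of "snd u" "snd v"] by auto
lemma tstep_same: "fst u = fst v \<Longrightarrow> tstep X d S u v \<le> d (snd u) (snd v) / 3"
  unfolding tstep_def by auto
lemma tstep_sym: "tstep X d S u v = tstep X d S v u"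
  unfolding tstep_def using teq_sym dsym by auto
lemma tstep_teq: "(u, v) \<in> teq X S \<Longrightarrow> tstep X d S u v = 0" by (simp add: tstep_def)
lemma tcost_nn: "0 \<le> tcost X d S zs" unfolding tcost_def by (rule sum_nonneg) (rule tstep_nn)

lemma tcost_append:
  "zs \<noteq> [] \<Longrightarrow> ws \<noteq> [] \<Longrightarrow> last zs = hd ws \<Longrightarrow>
   tcost X d S (zs @ tl ws) = tcost X d S zs + tcost X d S ws"
proof (induction zs)
  case Nil then show ?case by simp
next
  case (Cons x zs)
  note IH = Cons.IH and prems = Cons.prems
  show ?case
  proof (cases zs)
    case Nil
    then show ?thesis using prems by (cases ws) auto
  next
    case (Cons y zs')
    then have "tcost X d S ((x # zs) @ tl ws) = tstep X d S x y + tcost X d S (zs @ tl ws)" by simp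
    also have "\<dots> = tstep X d S x y + tcost X d S zs + tcost X d S ws"
      using IH prems \<open>zs = y # zs'\<close> by simp
    finally show ?thesis using \<open>zs = y # zs'\<close> by simp
  qed
qed

lemma tcost_rev: "tcost X d S (rev zs) = tcost X d S zs"
proof (induction zs)
  case Nil then show ?case by simp
next
  case (Cons x zs)
  show ?case
  proof (cases zs)
    case Nil then show ?thesis by simp
  next
    case (Cons y zs')
    have "rev (x # zs) = rev zs @ tl [y, x]" by simp
    then have "tcost X d S (rev (x # zs)) = tcost X d S (rev zs) + tcost X d S [y, x]"
      using tcost_append[of "rev zs" "[y, x]"] Cons by simp
    then show ?thesis using Cons.IH Cons tstep_sym[of x y] by simp
  qed
qed

lemma qd_le: "chain a b zs \<Longrightarrow> qd X d S a b \<le> tcost X d S zs"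
  unfolding qd_def chain_def
  by (rule cInf_lower) (auto intro!: bdd_belowI[of _ 0] simp: tcost_nn)

lemma qd_ge: "a \<in> NN \<times> X \<Longrightarrow> b \<in> NN \<times> X \<Longrightarrow> (\<And>zs. chain a b zs \<Longrightarrow> c \<le> tcost X d S zs)
   \<Longrightarrow> c \<le> qd X d S a b"
  unfolding qd_def
proof (rule cInf_greatest)
  assume "a \<in> NN \<times> X" "b \<in> NN \<times> X"
  then have "tcost X d S [a, b] \<in> {tcost X d S zs |zs. zs \<noteq> [] \<and> hd zs = a \<and> last zs = b \<and> set zs \<subseteq> NN \<times> X}"
    by (intro CollectI exI[of _ "[a, b]"]) auto
  then show "{tcost X d S zs |zs. zs \<noteq> [] \<and> hd zs = a \<and> last zs = b \<and> set zs \<subseteq> NN \<times> X} \<noteq> {}" by blast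
next
  fix x assume "\<And>zs. chain a b zs \<Longrightarrow> c \<le> tcost X d S zs"
    "x \<in> {tcost X d S zs |zs. zs \<noteq> [] \<and> hd zs = a \<and> last zs = b \<and> set zs \<subseteq> NN \<times> X}"
  then show "c \<le> x" unfolding chain_def by blast
qed

lemma qd_nn: "a \<in> NN \<times> X \<Longrightarrow> b \<in> NN \<times> X \<Longrightarrow> 0 \<le> qd X d S a b"
  by (rule qd_ge) (auto simp: tcost_nn)

lemma qd_step: "a \<in> NN \<times> X \<Longrightarrow> b \<in> NN \<times> X \<Longrightarrow> qd X d S a b \<le> tstep X d S a b"
  using qd_le[of a b "[a, b]"] by (simp add: chain_def)

lemma qd_refl: "a \<in> NN \<times> X \<Longrightarrow> qd X d S a a = 0"
  using qd_le[of a a "[a]"] qd_nn[of a a] by (simp add: chain_def)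

lemma qd_tri:
  assumes a: "a \<in> NN \<times> X" and b: "b \<in> NN \<times> X" and c: "c \<in> NN \<times> X"
  shows "qd X d S a c \<le> qd X d S a b + qd X d S b c"
proof -
  have 1: "qd X d S a c \<le> tcost X d S zs + tcost X d S ws" if "chain a b zs" "chain b c ws" for zs ws
  proof -
    have "chain a c (zs @ tl ws)"
    proof -
      have "last (zs @ tl ws) = c"
      proof (cases "tl ws = []")
        case True
        then have "ws = [b]" using that by (cases ws) (auto simp: chain_def)
        then show ?thesis using that True by (auto simp: chain_def)
      next
        case False
        then show ?thesis using that by (cases ws) (auto simp: chain_def)
      qed
      moreover have "set (tl ws) \<subseteq> set ws" by (cases ws) auto
      ultimately show ?thesis using that by (auto simp: chain_def)
    qed
    then have "qd X d S a c \<le> tcost X d S (zs @ tl ws)" by (rule qd_le)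
    also have "\<dots> = tcost X d S zs + tcost X d S ws"
      using that by (intro tcost_append) (auto simp: chain_def)
    finally show ?thesis .
  qed
  have 2: "qd X d S a c - tcost X d S ws \<le> qd X d S a b" if "chain b c ws" for ws
    by (rule qd_ge[OF a b]) (use 1 that in force)
  have "qd X d S a c - qd X d S a b \<le> qd X d S b c"
    by (rule qd_ge[OF b c]) (use 2 in force)
  then show ?thesis by simp
qed

lemma qd_sym_le: "a \<in> NN \<times> X \<Longrightarrow> b \<in> NN \<times> X \<Longrightarrow> qd X d S b a \<le> qd X d S a b"
proof (rule qd_ge)
  fix zs assume "chain a b zs"
  then have "chain b a (rev zs)" by (auto simp: chain_def hd_rev last_rev)
  then show "qd X d S b a \<le> tcost X d S zs" using qd_le tcost_rev by metis
qed

lemma qd_sym: "a \<in> NN \<times> X \<Longrightarrow> b \<in> NN \<times> X \<Longrightarrow> qd X d S a b = qd X d S b a"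
  using qd_sym_le by (meson order_antisym)

lemma qd_cong1: "(a, a') \<in> teq X S \<Longrightarrow> b \<in> NN \<times> X \<Longrightarrow> qd X d S a' b = qd X d S a b"
proof -
  assume h: "(a, a') \<in> teq X S" "b \<in> NN \<times> X"
  have a: "a \<in> NN \<times> X" "a' \<in> NN \<times> X" using teq_NN[OF h(1)] by auto
  have "qd X d S a' b \<le> qd X d S a' a + qd X d S a b" using qd_tri a h by blast
  also have "qd X d S a' a \<le> 0" using qd_step[of a' a] a tstep_teq[OF teq_sym[OF h(1)]] by simp
  finally have 1: "qd X d S a' b \<le> qd X d S a b" by simp
  have "qd X d S a b \<le> qd X d S a a' + qd X d S a' b" using qd_tri a h by blast
  also have "qd X d S a a' \<le> 0" using qd_step[of a a'] a tstep_teq[OF h(1)] by simp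
  finally show ?thesis using 1 by simp
qed

lemma qd_cong2: "(b, b') \<in> teq X S \<Longrightarrow> a \<in> NN \<times> X \<Longrightarrow> qd X d S a b' = qd X d S a b"
  using qd_cong1 qd_sym teq_NN by metis

lemma lip_chain:
  assumes F: "\<And>u v. u \<in> NN \<times> X \<Longrightarrow> v \<in> NN \<times> X \<Longrightarrow> F v - F u \<le> tstep X d S u v"
  shows "zs \<noteq> [] \<Longrightarrow> set zs \<subseteq> NN \<times> X \<Longrightarrow> F (last zs) - F (hd zs) \<le> tcost X d S zs"
proof (induction zs)
  case Nil then show ?case by simp
next
  case (Cons x zs)
  show ?case
  proof (cases zs)
    case Nil then show ?thesis by simp
  next
    case (Cons y zs')
    have "F (last zs) - F y \<le> tcost X d S zs" using Cons.IH Cons.prems \<open>zs = y # zs'\<close> by simp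
    moreover have "F y - F x \<le> tstep X d S x y" using F Cons.prems \<open>zs = y # zs'\<close> by simp
    ultimately show ?thesis using \<open>zs = y # zs'\<close> by simp
  qed
qed

lemma lip_qd:
  assumes F: "\<And>u v. u \<in> NN \<times> X \<Longrightarrow> v \<in> NN \<times> X \<Longrightarrow> F v - F u \<le> tstep X d S u v"
    and a: "a \<in> NN \<times> X" and b: "b \<in> NN \<times> X"
  shows "F b - F a \<le> qd X d S a b"
  by (rule qd_ge[OF a b]) (use lip_chain[OF F] in \<open>auto simp: chain_def\<close>)

lemma tclass_in: "a \<in> NN \<times> X \<Longrightarrow> tclass X S a \<in> tensor X S"
  unfolding tclass_def tensor_def by (rule quotientI)

lemma tensor_cases: "A \<in> tensor X S \<Longrightarrow> \<exists>a\<in>NN \<times> X. A = tclass X S a"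
  unfolding tclass_def tensor_def by (erule quotientE) blast

lemma tclass_mem_iff: "b \<in> tclass X S a \<longleftrightarrow> (a, b) \<in> teq X S"
  unfolding tclass_def by auto

lemma tclass_eq: "a \<in> NN \<times> X \<Longrightarrow> b \<in> NN \<times> X \<Longrightarrow> tclass X S a = tclass X S b \<longleftrightarrow> (a, b) \<in> teq X S"
  unfolding tclass_def using eq_equiv_class_iff[OF teq_equiv] by blast

lemma td_rep:
  assumes a: "a \<in> NN \<times> X" and b: "b \<in> NN \<times> X"
  shows "tensor_dist X d S (tclass X S a) (tclass X S b) = qd X d S a b"
proof -
  have "{qd X d S a' b' |a' b'. a' \<in> tclass X S a \<and> b' \<in> tclass X S b} = {qd X d S a b}"
  proof -
    have "qd X d S a' b' = qd X d S a b" if "(a, a') \<in> teq X S" "(b, b') \<in> teq X S" for a' b'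
      using qd_cong1[OF that(1), of b'] qd_cong2[OF that(2) a] teq_NN[OF that(2)] by simp
    moreover have "a \<in> tclass X S a" "b \<in> tclass X S b" using a b teq_refl tclass_mem_iff by auto
    ultimately show ?thesis unfolding tclass_mem_iff by blast
  qed
  then show ?thesis unfolding tensor_dist_def using tclass_in a b by simp
qed

end



definition gc :: "real \<times> real \<Rightarrow> int \<times> int \<Rightarrow> real \<times> real \<Rightarrow> real" where
  "gc c n q = (\<bar>real_of_int (fst n) + fst q - fst c\<bar> + \<bar>real_of_int (snd n) + snd q - snd c\<bar>) / 3"

lemma gc_nn: "0 \<le> gc c n q" by (simp add: gc_def)

lemma abs_tri3: "\<bar>a + x0 - c\<bar> \<le> \<bar>a + x - c\<bar> + \<bar>x0 - x\<bar>" for a x0 x c :: real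
  using abs_triangle_ineq[of "a + x - c" "x0 - x"] by simp

lemma gc_lip: "gc c m q0 \<le> gc c m q + (\<bar>fst q0 - fst q\<bar> + \<bar>snd q0 - snd q\<bar>) / 3"
  unfolding gc_def using abs_tri3[of "real_of_int (fst m)" "fst q0" "fst c" "fst q"]
    abs_tri3[of "real_of_int (snd m)" "snd q0" "snd c" "snd q"] by argo

lemma M00: "(0, 0) \<in> M0" by (simp add: M0_iff)

lemma min_lip: "a - e \<le> b \<Longrightarrow> 0 \<le> e \<Longrightarrow> min 2 a - min 2 b \<le> (e::real)"
  by (auto simp: min_def)

context sqms begin

definition Fb where
  "Fb c u = min 2 (Inf {gc c (fst u) q + d (snd u) (S q) / 3 | q. q \<in> M0})"

lemma Fb_bdd: "bdd_below {gc c n q + d y (S q) / 3 | q. q \<in> M0}"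
  by (rule bdd_belowI[of _ 0]) (auto intro: add_nonneg_nonneg gc_nn)

lemma Fb_ne: "{gc c n q + d y (S q) / 3 | q. q \<in> M0} \<noteq> {}"
  using M00 by blast

lemma Fb_nn: "0 \<le> Fb c u"
proof -
  have "0 \<le> Inf {gc c (fst u) q + d (snd u) (S q) / 3 | q. q \<in> M0}"
    by (rule cInf_greatest[OF Fb_ne]) (auto intro: add_nonneg_nonneg gc_nn)
  then show ?thesis by (simp add: Fb_def)
qed

lemma Fb_le2: "Fb c u \<le> 2" by (simp add: Fb_def)

lemma Fb_bnd: assumes "q0 \<in> M0" shows "Fb c (m, S q0) = min 2 (gc c m q0)"
proof -
  have "Inf {gc c m q + d (S q0) (S q) / 3 | q. q \<in> M0} = gc c m q0"
  proof (rule cInf_eq_minimum)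
    have "d (S q0) (S q0) = 0" using dzero[of "S q0" "S q0"] SX[OF assms] by simp
    then show "gc c m q0 \<in> {gc c m q + d (S q0) (S q) / 3 | q. q \<in> M0}"
      using assms by (intro CollectI exI[of _ q0]) simp
  next
    fix x assume "x \<in> {gc c m q + d (S q0) (S q) / 3 | q. q \<in> M0}"
    then obtain q where q: "q \<in> M0" "x = gc c m q + d (S q0) (S q) / 3" by blast
    have "gc c m q0 \<le> gc c m q + (\<bar>fst q0 - fst q\<bar> + \<bar>snd q0 - snd q\<bar>) / 3" by (rule gc_lip)
    also have "\<dots> \<le> x" using sq2[OF assms q(1)] q(2) by simp
    finally show "gc c m q0 \<le> x" .
  qed
  then show ?thesis by (simp add: Fb_def)
qed

lemma Fb_lip:
  assumes y: "y \<in> X" and y': "y' \<in> X"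
  shows "Fb c (m, y) - Fb c (m, y') \<le> d y y' / 3"
proof -
  let ?I = "\<lambda>y. Inf {gc c m q + d y (S q) / 3 | q. q \<in> M0}"
  have "?I y - d y y' / 3 \<le> ?I y'"
  proof (rule cInf_greatest[OF Fb_ne])
    fix x assume "x \<in> {gc c m q + d y' (S q) / 3 | q. q \<in> M0}"
    then obtain q where q: "q \<in> M0" "x = gc c m q + d y' (S q) / 3" by blast
    have "?I y \<le> gc c m q + d y (S q) / 3"
      by (rule cInf_lower[OF _ Fb_bdd]) (use q in blast)
    also have "d y (S q) \<le> d y y' + d y' (S q)" using dtri y y' SX[OF q(1)] by blast
    finally have "?I y \<le> gc c m q + (d y y' + d y' (S q)) / 3" by simp
    then show "?I y - d y y' / 3 \<le> x" using q(2) by argo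
  qed
  then show ?thesis unfolding Fb_def fst_conv snd_conv by (rule min_lip) simp
qed

lemma Fb_tstep:
  assumes u: "u \<in> NN \<times> X" and v: "v \<in> NN \<times> X"
  shows "Fb c v - Fb c u \<le> tstep X d S u v"
proof (cases "(u, v) \<in> teq X S")
  case True
  then have "u = v \<or> bnd u v" by (rule teq_char)
  then have "Fb c v = Fb c u"
  proof
    assume "bnd u v"
    then obtain m n p q where h: "p \<in> M0" "q \<in> M0" "u = (m, S p)" "v = (n, S q)" "geq m p n q"
      unfolding bnd_def by blast
    have "gc c m p = gc c n q" using h(5) unfolding gc_def geq_def by simp
    then show ?thesis using h Fb_bnd by simp
  qed simp
  then show ?thesis using tstep_nn by simp
next
  case False
  show ?thesis
  proof (cases "fst u = fst v")
    case True
    have "Fb c (fst v, snd v) - Fb c (fst v, snd u) \<le> d (snd v) (snd u) / 3"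
      using u v by (intro Fb_lip) auto
    moreover have "Fb c (fst v, snd u) = Fb c u" using True by (cases u) simp
    ultimately have "Fb c v - Fb c u \<le> d (snd v) (snd u) / 3" by simp
    then show ?thesis using False True dsym[of "snd u" "snd v"] by (simp add: tstep_def)
  next
    case F2: False
    then show ?thesis using False Fb_le2[of c v] Fb_nn[of c u] by (simp add: tstep_def)
  qed
qed

definition Gi where
  "Gi n0 y0 e u = (if fst u = n0 then min (d (snd u) y0 / 3) e else e)"

lemma Gi_tstep:
  assumes e: "0 \<le> e" "e \<le> 1" and eb: "\<forall>q\<in>M0. e \<le> d (S q) y0 / 3" and y0: "y0 \<in> X"
    and u: "u \<in> NN \<times> X" and v: "v \<in> NN \<times> X"
  shows "Gi n0 y0 e v - Gi n0 y0 e u \<le> tstep X d S u v"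
proof (cases "(u, v) \<in> teq X S")
  case True
  then have "u = v \<or> bnd u v" by (rule teq_char)
  then have "Gi n0 y0 e v = Gi n0 y0 e u"
  proof
    assume "bnd u v"
    then obtain m n p q where h: "p \<in> M0" "q \<in> M0" "u = (m, S p)" "v = (n, S q)"
      unfolding bnd_def by blast
    have "Gi n0 y0 e (m, S p) = e" using eb h(1) by (auto simp: Gi_def min_def)
    moreover have "Gi n0 y0 e (n, S q) = e" using eb h(2) by (auto simp: Gi_def min_def)
    ultimately show ?thesis using h by simp
  qed simp
  then show ?thesis using tstep_nn by simp
next
  case False
  show ?thesis
  proof (cases "fst u = fst v")
    case True
    have tri: "d (snd v) y0 \<le> d (snd v) (snd u) + d (snd u) y0"
      using dtri u v y0 by auto
    have "Gi n0 y0 e v - Gi n0 y0 e u \<le> d (snd v) (snd u) / 3"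
      using True tri dnn[of "snd v" "snd u"] by (auto simp: Gi_def min_def simp del: dnn)
    then show ?thesis using False True dsym[of "snd u" "snd v"] by (simp add: tstep_def)
  next
    case F2: False
    have "Gi n0 y0 e v \<le> 1" "0 \<le> Gi n0 y0 e u" using e by (auto simp: Gi_def min_def)
    then show ?thesis using False F2 by (simp add: tstep_def)
  qed
qed

lemma edge_eps:
  assumes L: "\<And>r s. r \<in> {0..1} \<Longrightarrow> s \<in> {0..1} \<Longrightarrow> d (\<phi> r) (\<phi> s) \<le> \<bar>s - r\<bar>"
    and P: "\<And>t. t \<in> {0..1} \<Longrightarrow> \<phi> t \<in> X \<and> \<phi> t \<noteq> y0" and y0: "y0 \<in> X"
  shows "\<exists>e>0. \<forall>t\<in>{0..1}. e \<le> d (\<phi> t) y0"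
proof -
  let ?f = "\<lambda>t. d (\<phi> t) y0"
  have "lipschitz_on 1 {0..1::real} ?f"
  proof (rule lipschitz_onI)
    fix x y :: real assume xy: "x \<in> {0..1}" "y \<in> {0..1}"
    have "d (\<phi> x) y0 \<le> d (\<phi> x) (\<phi> y) + d (\<phi> y) y0" using dtri P xy y0 by blast
    moreover have "d (\<phi> y) y0 \<le> d (\<phi> y) (\<phi> x) + d (\<phi> x) y0" using dtri P xy y0 by blast
    moreover have "d (\<phi> x) (\<phi> y) \<le> \<bar>y - x\<bar>" using L xy by blast
    moreover have "d (\<phi> y) (\<phi> x) = d (\<phi> x) (\<phi> y)" by (rule dsym)
    ultimately have "\<bar>?f x - ?f y\<bar> \<le> \<bar>y - x\<bar>" unfolding abs_le_iff by linarith
    then show "dist (?f x) (?f y) \<le> 1 * dist x y" by (simp add: dist_real_def abs_minus_commute)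
  qed simp
  then have "continuous_on {0..1} ?f" by (rule lipschitz_on_continuous_on)
  then obtain t0 where t0: "t0 \<in> {0..1}" "\<forall>t\<in>{0..1}. ?f t0 \<le> ?f t"
    using continuous_attains_inf[of "{0..1::real}" ?f] by auto
  have "?f t0 \<noteq> 0" using dzero[of "\<phi> t0" y0] P[OF t0(1)] y0 by auto
  then have "?f t0 > 0" using dnn[of "\<phi> t0" y0] by linarith
  then show ?thesis using t0 by blast
qed

lemma eps_bnd:
  assumes y0: "y0 \<in> X" and ny: "y0 \<notin> S ` M0"
  shows "\<exists>e>0. \<forall>q\<in>M0. e \<le> d (S q) y0"
proof -
  have A: "\<exists>e>0. \<forall>t\<in>{0..1}. e \<le> d (S (i, t)) y0" if i: "i \<in> {0, 1}" for i :: real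
  proof (rule edge_eps[OF _ _ y0])
    fix r s :: real assume "r \<in> {0..1}" "s \<in> {0..1}"
    then show "d (S (i, r)) (S (i, s)) \<le> \<bar>s - r\<bar>" using sq1a[OF i] by simp
  next
    fix t :: real assume "t \<in> {0..1}"
    then have "(i, t) \<in> M0" using i by (auto simp: M0_iff)
    then show "S (i, t) \<in> X \<and> S (i, t) \<noteq> y0" using SX ny by force
  qed
  have B: "\<exists>e>0. \<forall>t\<in>{0..1}. e \<le> d (S (t, i)) y0" if i: "i \<in> {0, 1}" for i :: real
  proof (rule edge_eps[OF _ _ y0])
    fix r s :: real assume "r \<in> {0..1}" "s \<in> {0..1}"
    then show "d (S (r, i)) (S (s, i)) \<le> \<bar>s - r\<bar>" using sq1b[OF i] by simp
  next
    fix t :: real assume "t \<in> {0..1}"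
    then have "(t, i) \<in> M0" using i by (auto simp: M0_iff)
    then show "S (t, i) \<in> X \<and> S (t, i) \<noteq> y0" using SX ny by force
  qed
  obtain e1 where e1: "e1 > 0" "\<forall>t\<in>{0..1}. e1 \<le> d (S (0, t)) y0" using A[of 0] by auto
  obtain e2 where e2: "e2 > 0" "\<forall>t\<in>{0..1}. e2 \<le> d (S (1, t)) y0" using A[of 1] by auto
  obtain e3 where e3: "e3 > 0" "\<forall>t\<in>{0..1}. e3 \<le> d (S (t, 0)) y0" using B[of 0] by auto
  obtain e4 where e4: "e4 > 0" "\<forall>t\<in>{0..1}. e4 \<le> d (S (t, 1)) y0" using B[of 1] by auto
  define e where "e = min (min e1 e2) (min e3 e4)"
  have "e > 0" using e1 e2 e3 e4 by (simp add: e_def)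
  moreover have "e \<le> d (S q) y0" if q: "q \<in> M0" for q
  proof -
    obtain a b where ab: "q = (a, b)" by (cases q)
    have "0 \<le> a" "a \<le> 1" "0 \<le> b" "b \<le> 1" "a = 0 \<or> a = 1 \<or> b = 0 \<or> b = 1"
      using q ab by (auto simp: M0_iff)
    then consider "a = 0" | "a = 1" | "b = 0" | "b = 1" by blast
    then show ?thesis
    proof cases
      case 1 then show ?thesis using e1(2) \<open>0 \<le> b\<close> \<open>b \<le> 1\<close> ab unfolding e_def by force
    next
      case 2 then show ?thesis using e2(2) \<open>0 \<le> b\<close> \<open>b \<le> 1\<close> ab unfolding e_def by force
    next
      case 3 then show ?thesis using e3(2) \<open>0 \<le> a\<close> \<open>a \<le> 1\<close> ab unfolding e_def by force
    next
      case 4 then show ?thesis using e4(2) \<open>0 \<le> a\<close> \<open>a \<le> 1\<close> ab unfolding e_def by force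
    qed
  qed
  ultimately show ?thesis by blast
qed

lemma pos_int:
  assumes a: "a \<in> NN \<times> X" and b: "b \<in> NN \<times> X" and na: "snd a \<notin> S ` M0"
    and z: "qd X d S a b = 0"
  shows "(a, b) \<in> teq X S"
proof -
  have sa: "snd a \<in> X" using a by auto
  obtain e where e: "e > 0" "\<forall>q\<in>M0. e \<le> d (S q) (snd a)" using eps_bnd[OF sa na] by blast
  define e' where "e' = min (e / 3) 1"
  have e': "0 < e'" "e' \<le> 1" "\<forall>q\<in>M0. e' \<le> d (S q) (snd a) / 3"
    using e by (auto simp: e'_def)
  have "Gi (fst a) (snd a) e' b - Gi (fst a) (snd a) e' a \<le> qd X d S a b"
    by (rule lip_qd[where F = "Gi (fst a) (snd a) e'", OF _ a b]) (rule Gi_tstep, use e' a in auto)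
  moreover have "Gi (fst a) (snd a) e' a = 0"
    using dzero[of "snd a" "snd a"] a e' by (auto simp: Gi_def min_def)
  ultimately have g: "Gi (fst a) (snd a) e' b \<le> 0" using z by simp
  show ?thesis
  proof (cases "fst b = fst a")
    case True
    then have "min (d (snd b) (snd a) / 3) e' \<le> 0" using g by (simp add: Gi_def)
    then have "d (snd b) (snd a) \<le> 0" using e' by (auto simp: min_def split: if_splits)
    then have "snd b = snd a" using dzero[of "snd b" "snd a"] dnn[of "snd b" "snd a"] a b by auto
    then have "b = a" using True by (simp add: prod_eq_iff)
    then show ?thesis using teq_refl a by simp
  next
    case False
    then show ?thesis using g e' by (simp add: Gi_def)
  qed
qed

lemma pos:
  assumes a: "a \<in> NN \<times> X" and b: "b \<in> NN \<times> X" and z: "qd X d S a b = 0"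
  shows "(a, b) \<in> teq X S"
proof (cases "snd a \<in> S ` M0 \<and> snd b \<in> S ` M0")
  case False
  then consider "snd a \<notin> S ` M0" | "snd b \<notin> S ` M0" by blast
  then show ?thesis
  proof cases
    case 1 then show ?thesis using pos_int a b z by blast
  next
    case 2
    then have "(b, a) \<in> teq X S" using pos_int[OF b a] z qd_sym[OF a b] by simp
    then show ?thesis by (rule teq_sym)
  qed
next
  case True
  then obtain p q where pq: "p \<in> M0" "q \<in> M0" "snd a = S p" "snd b = S q" by blast
  obtain m where m: "a = (m, S p)" using pq by (cases a) auto
  obtain n where n: "b = (n, S q)" using pq by (cases b) auto
  have mn: "m \<in> NN" "n \<in> NN" using a b m n by auto
  show ?thesis
  proof (cases "geq m p n q")
    case True
    then show ?thesis using teq_intro[OF mn(1) mn(2) pq(1) pq(2)] m n by simp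
  next
    case False
    define c where "c = (real_of_int (fst m) + fst p, real_of_int (snd m) + snd p)"
    have "Fb c b - Fb c a \<le> qd X d S a b"
      by (rule lip_qd[where F = "Fb c", OF _ a b]) (rule Fb_tstep)
    moreover have "Fb c a = 0" using Fb_bnd[OF pq(1)] m by (simp add: c_def gc_def)
    moreover have "Fb c b > 0"
    proof -
      have "real_of_int (fst n) + fst q - fst c \<noteq> 0 \<or> real_of_int (snd n) + snd q - snd c \<noteq> 0"
        using False unfolding c_def geq_def by auto
      then have "0 < \<bar>real_of_int (fst n) + fst q - fst c\<bar> + \<bar>real_of_int (snd n) + snd q - snd c\<bar>"
        by (metis abs_ge_zero add_pos_nonneg add_nonneg_pos zero_less_abs_iff)
      then have "gc c n q > 0" unfolding gc_def by simp
      then show ?thesis using Fb_bnd[OF pq(2)] n by simp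
    qed
    ultimately show ?thesis using z by simp
  qed
qed

lemma tensor_ms: "Metric_space (tensor X S) (tensor_dist X d S)"
proof
  fix A B
  show "0 \<le> tensor_dist X d S A B"
  proof (cases "A \<in> tensor X S \<and> B \<in> tensor X S")
    case True
    then obtain a b where "a \<in> NN \<times> X" "b \<in> NN \<times> X" "A = tclass X S a" "B = tclass X S b"
      using tensor_cases by metis
    then show ?thesis using td_rep qd_nn by simp
  next
    case False
    show ?thesis by (subst tensor_dist_def, subst if_not_P[OF False]) simp
  qed
  show "tensor_dist X d S A B = tensor_dist X d S B A"
  proof (cases "A \<in> tensor X S \<and> B \<in> tensor X S")
    case True
    then obtain a b where "a \<in> NN \<times> X" "b \<in> NN \<times> X" "A = tclass X S a" "B = tclass X S b"
      using tensor_cases by metis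
    then show ?thesis using td_rep qd_sym by simp
  qed (auto simp add: tensor_dist_def)
next
  fix A B assume AB: "A \<in> tensor X S" "B \<in> tensor X S"
  then obtain a b where ab: "a \<in> NN \<times> X" "b \<in> NN \<times> X" "A = tclass X S a" "B = tclass X S b"
    using tensor_cases by metis
  show "tensor_dist X d S A B = 0 \<longleftrightarrow> A = B"
  proof
    assume "tensor_dist X d S A B = 0"
    then have "qd X d S a b = 0" using td_rep ab by simp
    then have "(a, b) \<in> teq X S" using pos ab by blast
    then show "A = B" using tclass_eq ab by simp
  next
    assume "A = B"
    then have "(a, b) \<in> teq X S" using tclass_eq ab by simp
    then have "qd X d S a b = qd X d S a a" using qd_cong2 ab by blast
    then show "tensor_dist X d S A B = 0" using td_rep ab qd_refl by simp
  qed
next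
  fix A B C assume ABC: "A \<in> tensor X S" "B \<in> tensor X S" "C \<in> tensor X S"
  then obtain a b c where "a \<in> NN \<times> X" "b \<in> NN \<times> X" "c \<in> NN \<times> X"
     "A = tclass X S a" "B = tclass X S b" "C = tclass X S c"
    using tensor_cases by metis
  then show "tensor_dist X d S A C \<le> tensor_dist X d S A B + tensor_dist X d S B C"
    using td_rep qd_tri by simp
qed

end



definition kf :: "real \<Rightarrow> int" where
  "kf x = (if 3 * x \<le> 1 then 0 else if 3 * x \<le> 2 then 1 else 2)"

lemma tS_ex: "p \<in> M0 \<Longrightarrow> \<exists>n. n \<in> NN \<and> 3 * fst p - real_of_int (fst n) \<in> {0..1} \<and>
    3 * snd p - real_of_int (snd n) \<in> {0..1}"
  by (rule exI[of _ "(kf (fst p), kf (snd p))"]) (auto simp: kf_def NN_iff M0_iff)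

lemma tS_M0:
  assumes "p \<in> M0" "n \<in> NN" "3 * fst p - real_of_int (fst n) \<in> {0..1}"
    "3 * snd p - real_of_int (snd n) \<in> {0..1}"
  shows "(3 * fst p - real_of_int (fst n), 3 * snd p - real_of_int (snd n)) \<in> M0"
proof -
  have "fst n \<in> {0,1,2}" "snd n \<in> {0,1,2}" using assms(2) by (auto simp: NN_iff)
  then show ?thesis using assms(1,3,4) by (auto simp: M0_iff)
qed

lemma abs3: "\<bar>3 * a - 3 * b\<bar> = 3 * \<bar>a - (b::real)\<bar>" by (cases "a \<le> b") auto

context sqms begin

lemma tS_rep:
  assumes p: "p \<in> M0" and n: "n \<in> NN" and q: "q \<in> M0"
    and e1: "real_of_int (fst n) + fst q = 3 * fst p" and e2: "real_of_int (snd n) + snd q = 3 * snd p"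
  shows "tensor_S X S p = tclass X S (n, S q)"
proof -
  define n' where "n' = (SOME n. n \<in> NN \<and> 3 * fst p - real_of_int (fst n) \<in> {0..1} \<and>
      3 * snd p - real_of_int (snd n) \<in> {0..1})"
  have n': "n' \<in> NN \<and> 3 * fst p - real_of_int (fst n') \<in> {0..1} \<and> 3 * snd p - real_of_int (snd n') \<in> {0..1}"
    unfolding n'_def by (rule someI_ex[OF tS_ex[OF p]])
  define q' where "q' = (3 * fst p - real_of_int (fst n'), 3 * snd p - real_of_int (snd n'))"
  have q': "q' \<in> M0" unfolding q'_def using tS_M0[OF p] n' by blast
  have "tensor_S X S p = tclass X S (n', S q')"
    unfolding tensor_S_def Let_def n'_def[symmetric] q'_def by simp
  also have "\<dots> = tclass X S (n, S q)"
  proof -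
    have "geq n' q' n q" using e1 e2 by (simp add: geq_def q'_def)
    then have "((n', S q'), (n, S q)) \<in> teq X S" using teq_intro n' n q' q by blast
    then show ?thesis using tclass_eq teq_NN by blast
  qed
  finally show ?thesis .
qed

lemma tS_get:
  assumes p: "p \<in> M0"
  shows "\<exists>n q. n \<in> NN \<and> q \<in> M0 \<and> real_of_int (fst n) + fst q = 3 * fst p \<and>
     real_of_int (snd n) + snd q = 3 * snd p \<and> tensor_S X S p = tclass X S (n, S q)"
proof -
  obtain n where n: "n \<in> NN" "3 * fst p - real_of_int (fst n) \<in> {0..1}"
    "3 * snd p - real_of_int (snd n) \<in> {0..1}" using tS_ex[OF p] by blast
  define q where "q = (3 * fst p - real_of_int (fst n), 3 * snd p - real_of_int (snd n))"
  have q: "q \<in> M0" unfolding q_def using tS_M0[OF p n] .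
  have e: "real_of_int (fst n) + fst q = 3 * fst p" "real_of_int (snd n) + snd q = 3 * snd p"
    by (simp_all add: q_def)
  show ?thesis using tS_rep[OF p n(1) q e] n(1) q e by blast
qed

lemma tS_in: "p \<in> M0 \<Longrightarrow> tensor_S X S p \<in> tensor X S"
  using tS_get tclass_in SX by fastforce

lemma tS_inj: "inj_on (tensor_S X S) M0"
proof (rule inj_onI)
  fix p p' assume p: "p \<in> M0" and p': "p' \<in> M0" and eq: "tensor_S X S p = tensor_S X S p'"
  obtain n q where A: "n \<in> NN" "q \<in> M0" "real_of_int (fst n) + fst q = 3 * fst p"
     "real_of_int (snd n) + snd q = 3 * snd p" "tensor_S X S p = tclass X S (n, S q)"
    using tS_get[OF p] by blast
  obtain n' q' where B: "n' \<in> NN" "q' \<in> M0" "real_of_int (fst n') + fst q' = 3 * fst p'"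
     "real_of_int (snd n') + snd q' = 3 * snd p'" "tensor_S X S p' = tclass X S (n', S q')"
    using tS_get[OF p'] by blast
  have "((n, S q), (n', S q')) \<in> teq X S" using eq A B tclass_eq SX by auto
  then have "(n, S q) = (n', S q') \<or> bnd (n, S q) (n', S q')" by (rule teq_char)
  then have "geq n q n' q'"
  proof
    assume "(n, S q) = (n', S q')"
    then have "n = n'" "q = q'" using Sinj A B by auto
    then show ?thesis by (simp add: geq_def)
  next
    assume "bnd (n, S q) (n', S q')"
    then obtain m1 m2 p1 p2 where h: "p1 \<in> M0" "p2 \<in> M0" "(n, S q) = (m1, S p1)"
      "(n', S q') = (m2, S p2)" "geq m1 p1 m2 p2" unfolding bnd_def by blast
    then have "q = p1" "q' = p2" "n = m1" "n' = m2" using Sinj A B by auto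
    then show ?thesis using h by simp
  qed
  then show "p = p'" using A B by (auto simp: geq_def prod_eq_iff)
qed

lemma tS_sq2:
  assumes p: "p \<in> M0" and p': "p' \<in> M0"
  shows "\<bar>fst p - fst p'\<bar> + \<bar>snd p - snd p'\<bar> \<le> tensor_dist X d S (tensor_S X S p) (tensor_S X S p')"
proof -
  obtain n q where A: "n \<in> NN" "q \<in> M0" "real_of_int (fst n) + fst q = 3 * fst p"
     "real_of_int (snd n) + snd q = 3 * snd p" "tensor_S X S p = tclass X S (n, S q)"
    using tS_get[OF p] by blast
  obtain n' q' where B: "n' \<in> NN" "q' \<in> M0" "real_of_int (fst n') + fst q' = 3 * fst p'"
     "real_of_int (snd n') + snd q' = 3 * snd p'" "tensor_S X S p' = tclass X S (n', S q')"
    using tS_get[OF p'] by blast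
  have a: "(n, S q) \<in> NN \<times> X" using A SX by auto
  have b: "(n', S q') \<in> NN \<times> X" using B SX by auto
  define c where "c = (3 * fst p, 3 * snd p)"
  have "Fb c (n', S q') - Fb c (n, S q) \<le> qd X d S (n, S q) (n', S q')"
    by (rule lip_qd[where F = "Fb c", OF _ a b]) (rule Fb_tstep)
  moreover have "Fb c (n, S q) = 0" using Fb_bnd[OF A(2)] A by (simp add: gc_def c_def)
  moreover have "Fb c (n', S q') = \<bar>fst p - fst p'\<bar> + \<bar>snd p - snd p'\<bar>"
  proof -
    have g: "gc c n' q' = \<bar>fst p - fst p'\<bar> + \<bar>snd p - snd p'\<bar>"
      unfolding gc_def c_def using B by (simp add: abs3 abs_minus_commute)
    have "\<bar>fst p - fst p'\<bar> + \<bar>snd p - snd p'\<bar> \<le> 2" using p p' by (auto simp: M0_iff)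
    then show ?thesis using Fb_bnd[OF B(2)] g by simp
  qed
  ultimately show ?thesis using td_rep a b A B by simp
qed

lemma tS_loc_a:
  assumes i: "i \<in> {0, 1}" and r: "r \<in> {0..1}" and s: "s \<in> {0..1}" and k: "k \<in> {0, 1, 2::int}"
    and b: "real_of_int k \<le> 3 * r" "3 * r \<le> real_of_int k + 1" "real_of_int k \<le> 3 * s" "3 * s \<le> real_of_int k + 1"
  shows "tensor_dist X d S (tensor_S X S (i, r)) (tensor_S X S (i, s)) \<le> \<bar>s - r\<bar>"
proof -
  define n where "n = (if i = 0 then 0 else 2 :: int, k)"
  define q where "q = (i, 3 * r - real_of_int k)"
  define q' where "q' = (i, 3 * s - real_of_int k)"
  have n: "n \<in> NN" using k by (auto simp: n_def NN_iff)
  have q: "q \<in> M0" "q' \<in> M0" using i b by (auto simp: q_def q'_def M0_iff)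
  have e: "real_of_int (fst n) + i = 3 * i" using i by (auto simp: n_def)
  have 1: "tensor_S X S (i, r) = tclass X S (n, S q)"
    by (rule tS_rep) (use i r n q e in \<open>auto simp: q_def n_def M0_iff\<close>)
  have 2: "tensor_S X S (i, s) = tclass X S (n, S q')"
    by (rule tS_rep) (use i s n q e in \<open>auto simp: q'_def n_def M0_iff\<close>)
  have a: "(n, S q) \<in> NN \<times> X" "(n, S q') \<in> NN \<times> X" using n q SX by auto
  have "qd X d S (n, S q) (n, S q') \<le> tstep X d S (n, S q) (n, S q')" using qd_step a by blast
  also have "\<dots> \<le> d (S q) (S q') / 3" using tstep_same[of "(n, S q)" "(n, S q')"] by simp
  also have "d (S q) (S q') = \<bar>(3 * s - real_of_int k) - (3 * r - real_of_int k)\<bar>"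
    unfolding q_def q'_def by (rule sq1a) (use i b in auto)
  finally show ?thesis using 1 2 td_rep a by (simp add: abs3[symmetric])
qed

lemma tS_loc_b:
  assumes i: "i \<in> {0, 1}" and r: "r \<in> {0..1}" and s: "s \<in> {0..1}" and k: "k \<in> {0, 1, 2::int}"
    and b: "real_of_int k \<le> 3 * r" "3 * r \<le> real_of_int k + 1" "real_of_int k \<le> 3 * s" "3 * s \<le> real_of_int k + 1"
  shows "tensor_dist X d S (tensor_S X S (r, i)) (tensor_S X S (s, i)) \<le> \<bar>s - r\<bar>"
proof -
  define n where "n = (k, if i = 0 then 0 else 2 :: int)"
  define q where "q = (3 * r - real_of_int k, i)"
  define q' where "q' = (3 * s - real_of_int k, i)"
  have n: "n \<in> NN" using k by (auto simp: n_def NN_iff)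
  have q: "q \<in> M0" "q' \<in> M0" using i b by (auto simp: q_def q'_def M0_iff)
  have e: "real_of_int (snd n) + i = 3 * i" using i by (auto simp: n_def)
  have 1: "tensor_S X S (r, i) = tclass X S (n, S q)"
    by (rule tS_rep) (use i r n q e in \<open>auto simp: q_def n_def M0_iff\<close>)
  have 2: "tensor_S X S (s, i) = tclass X S (n, S q')"
    by (rule tS_rep) (use i s n q e in \<open>auto simp: q'_def n_def M0_iff\<close>)
  have a: "(n, S q) \<in> NN \<times> X" "(n, S q') \<in> NN \<times> X" using n q SX by auto
  have "qd X d S (n, S q) (n, S q') \<le> tstep X d S (n, S q) (n, S q')" using qd_step a by blast
  also have "\<dots> \<le> d (S q) (S q') / 3" using tstep_same[of "(n, S q)" "(n, S q')"] by simp
  also have "d (S q) (S q') = \<bar>(3 * s - real_of_int k) - (3 * r - real_of_int k)\<bar>"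
    unfolding q_def q'_def by (rule sq1b) (use i b in auto)
  finally show ?thesis using 1 2 td_rep a by (simp add: abs3[symmetric])
qed

lemma tS_sq1a:
  assumes i: "i \<in> {0, 1}" and r: "r \<in> {0..1}" and s: "s \<in> {0..1}"
  shows "tensor_dist X d S (tensor_S X S (i, r)) (tensor_S X S (i, s)) = \<bar>s - r\<bar>"
proof (rule order_antisym)
  show "tensor_dist X d S (tensor_S X S (i, r)) (tensor_S X S (i, s)) \<le> \<bar>s - r\<bar>"
  proof (rule split_thirds[OF tensor_ms, where \<phi> = "\<lambda>t. tensor_S X S (i, t)", OF _ _ r s])
    fix t :: real assume "t \<in> {0..1}"
    then show "tensor_S X S (i, t) \<in> tensor X S" using i by (intro tS_in) (auto simp: M0_iff)
  next
    fix r s :: real and k :: int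
    assume "r \<in> {0..1}" "s \<in> {0..1}" "k \<in> {0, 1, 2}" "real_of_int k \<le> 3 * r" "3 * r \<le> real_of_int k + 1"
      "real_of_int k \<le> 3 * s" "3 * s \<le> real_of_int k + 1"
    then show "tensor_dist X d S (tensor_S X S (i, r)) (tensor_S X S (i, s)) \<le> \<bar>s - r\<bar>"
      using tS_loc_a[OF i] by blast
  qed
  have "(i, r) \<in> M0" "(i, s) \<in> M0" using i r s by (auto simp: M0_iff)
  then show "\<bar>s - r\<bar> \<le> tensor_dist X d S (tensor_S X S (i, r)) (tensor_S X S (i, s))"
    using tS_sq2 by (fastforce simp: abs_minus_commute)
qed

lemma tS_sq1b:
  assumes i: "i \<in> {0, 1}" and r: "r \<in> {0..1}" and s: "s \<in> {0..1}"
  shows "tensor_dist X d S (tensor_S X S (r, i)) (tensor_S X S (s, i)) = \<bar>s - r\<bar>"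
proof (rule order_antisym)
  show "tensor_dist X d S (tensor_S X S (r, i)) (tensor_S X S (s, i)) \<le> \<bar>s - r\<bar>"
  proof (rule split_thirds[OF tensor_ms, where \<phi> = "\<lambda>t. tensor_S X S (t, i)", OF _ _ r s])
    fix t :: real assume "t \<in> {0..1}"
    then show "tensor_S X S (t, i) \<in> tensor X S" using i by (intro tS_in) (auto simp: M0_iff)
  next
    fix r s :: real and k :: int
    assume "r \<in> {0..1}" "s \<in> {0..1}" "k \<in> {0, 1, 2}" "real_of_int k \<le> 3 * r" "3 * r \<le> real_of_int k + 1"
      "real_of_int k \<le> 3 * s" "3 * s \<le> real_of_int k + 1"
    then show "tensor_dist X d S (tensor_S X S (r, i)) (tensor_S X S (s, i)) \<le> \<bar>s - r\<bar>"
      using tS_loc_b[OF i] by blast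
  qed
  have "(r, i) \<in> M0" "(s, i) \<in> M0" using i r s by (auto simp: M0_iff)
  then show "\<bar>s - r\<bar> \<le> tensor_dist X d S (tensor_S X S (r, i)) (tensor_S X S (s, i))"
    using tS_sq2 by (fastforce simp: abs_minus_commute)
qed

lemma tensor_le2: "A \<in> tensor X S \<Longrightarrow> B \<in> tensor X S \<Longrightarrow> tensor_dist X d S A B \<le> 2"
proof -
  assume "A \<in> tensor X S" "B \<in> tensor X S"
  then obtain a b where ab: "a \<in> NN \<times> X" "b \<in> NN \<times> X" "A = tclass X S a" "B = tclass X S b"
    using tensor_cases by metis
  then have "qd X d S a b \<le> 2" using qd_step tstep_le2 order_trans by blast
  then show ?thesis using td_rep ab by simp
qed

lemma tensor_sq: "square_ms (tensor X S) (tensor_dist X d S) (tensor_S X S)"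
  unfolding square_ms_def
  using tensor_ms tensor_le2 tS_in tS_inj tS_sq1a tS_sq1b tS_sq2 by blast

lemma tmap_id: "A \<in> tensor X S \<Longrightarrow> tensor_map X S id A = A"
proof -
  assume "A \<in> tensor X S"
  then obtain a where a: "a \<in> NN \<times> X" "A = tclass X S a" using tensor_cases by blast
  have "a \<in> A" using a teq_refl tclass_mem_iff by blast
  then have "(SOME a. a \<in> A) \<in> A" by (rule someI)
  then have "(a, SOME a. a \<in> A) \<in> teq X S" using a tclass_mem_iff by blast
  then have "tclass X S (SOME a. a \<in> A) = A" using a tclass_eq teq_NN by metis
  then show ?thesis unfolding tensor_map_def Let_def by simp
qed

end

lemma tmap_class_gen:
  assumes Y: "sqms Y e T"
    and F: "\<And>u v. (u, v) \<in> teq X S \<Longrightarrow> ((fst u, f (snd u)), (fst v, f (snd v))) \<in> teq Y T"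
    and a: "a \<in> NN \<times> X"
  shows "tensor_map Y T f (tclass X S a) = tclass Y T (fst a, f (snd a))"
proof -
  have "(a, a) \<in> teq X S" using a by (simp add: teq_def)
  then have "a \<in> tclass X S a" by (simp add: tclass_def)
  then have "(SOME z. z \<in> tclass X S a) \<in> tclass X S a" by (rule someI[of "\<lambda>x. x \<in> tclass X S a"])
  then have "(a, SOME a'. a' \<in> tclass X S a) \<in> teq X S" by (simp add: tclass_def)
  from F[OF this] have "tclass Y T (fst (SOME a'. a' \<in> tclass X S a), f (snd (SOME a'. a' \<in> tclass X S a)))
     = tclass Y T (fst a, f (snd a))"
    using sqms.tclass_eq[OF Y] sqms.teq_NN[OF Y] sqms.teq_sym[OF Y] by metis
  then show ?thesis unfolding tensor_map_def Let_def by simp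
qed

locale sqms2 = X: sqms X d S + Y: sqms Y e T
  for X :: "'a set" and d S and Y :: "'b set" and e T +
  fixes f :: "'a \<Rightarrow> 'b"
  assumes mor: "sqms_mor X d S Y e T f"
begin

lemma fX: "x \<in> X \<Longrightarrow> f x \<in> Y" using mor by (auto simp: sqms_mor_def)
lemma fshort: "x \<in> X \<Longrightarrow> y \<in> X \<Longrightarrow> e (f x) (f y) \<le> d x y" using mor by (auto simp: sqms_mor_def)
lemma fS: "p \<in> M0 \<Longrightarrow> f (S p) = T p" using mor by (auto simp: sqms_mor_def)

lemma gm_NN: "u \<in> NN \<times> X \<Longrightarrow> (fst u, f (snd u)) \<in> NN \<times> Y" using fX by auto

lemma fmap_teq:
  assumes uv: "(u, v) \<in> teq X S"
  shows "((fst u, f (snd u)), (fst v, f (snd v))) \<in> teq Y T"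
proof -
  have "u = v \<or> X.bnd u v" using X.teq_char[OF uv] .
  then show ?thesis
  proof
    assume "u = v"
    then show ?thesis using Y.teq_refl gm_NN X.teq_NN[OF uv] by simp
  next
    assume "X.bnd u v"
    then obtain m n p q where h: "m \<in> NN" "n \<in> NN" "p \<in> M0" "q \<in> M0" "u = (m, S p)" "v = (n, S q)" "geq m p n q"
      unfolding X.bnd_def by blast
    then show ?thesis using Y.teq_intro[OF h(1-4,7)] fS by simp
  qed
qed

lemma tmap_class: "a \<in> NN \<times> X \<Longrightarrow> tensor_map Y T f (tclass X S a) = tclass Y T (fst a, f (snd a))"
  by (rule tmap_class_gen[OF Y.sqms_axioms fmap_teq])

lemma tmap_in: "A \<in> tensor X S \<Longrightarrow> tensor_map Y T f A \<in> tensor Y T"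
  using X.tensor_cases tmap_class Y.tclass_in gm_NN by metis

lemma tstep_map:
  assumes u: "u \<in> NN \<times> X" and v: "v \<in> NN \<times> X"
  shows "tstep Y e T (fst u, f (snd u)) (fst v, f (snd v)) \<le> tstep X d S u v"
proof (cases "(u, v) \<in> teq X S")
  case True
  then show ?thesis using fmap_teq Y.tstep_teq X.tstep_nn by simp
next
  case False
  show ?thesis
  proof (cases "fst u = fst v")
    case True
    have "tstep Y e T (fst u, f (snd u)) (fst v, f (snd v)) \<le> e (f (snd u)) (f (snd v)) / 3"
      using Y.tstep_same[of "(fst u, f (snd u))" "(fst v, f (snd v))"] True by simp
    also have "\<dots> \<le> d (snd u) (snd v) / 3" using fshort u v by (simp add: divide_right_mono mem_Times_iff)
    finally show ?thesis using False True by (simp add: tstep_def)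
  next
    case F2: False
    then show ?thesis using False Y.tstep_le2 gm_NN u v by (simp add: tstep_def)
  qed
qed

lemma tcost_map: "set zs \<subseteq> NN \<times> X \<Longrightarrow>
   tcost Y e T (map (\<lambda>u. (fst u, f (snd u))) zs) \<le> tcost X d S zs"
proof (induction zs)
  case Nil then show ?case by simp
next
  case (Cons x zs)
  show ?case
  proof (cases zs)
    case Nil then show ?thesis by simp
  next
    case (Cons y zs')
    have "tstep Y e T (fst x, f (snd x)) (fst y, f (snd y)) \<le> tstep X d S x y"
      using tstep_map Cons.prems \<open>zs = y # zs'\<close> by simp
    moreover have "tcost Y e T (map (\<lambda>u. (fst u, f (snd u))) zs) \<le> tcost X d S zs"
      using Cons.IH Cons.prems by simp
    ultimately show ?thesis using \<open>zs = y # zs'\<close> by simp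
  qed
qed

lemma qd_mono:
  assumes a: "a \<in> NN \<times> X" and b: "b \<in> NN \<times> X"
  shows "qd Y e T (fst a, f (snd a)) (fst b, f (snd b)) \<le> qd X d S a b"
proof (rule X.qd_ge[OF a b])
  fix zs assume zs: "X.chain a b zs"
  have "Y.chain (fst a, f (snd a)) (fst b, f (snd b)) (map (\<lambda>u. (fst u, f (snd u))) zs)"
    using zs gm_NN unfolding X.chain_def Y.chain_def by (auto simp: hd_map last_map)
  then have "qd Y e T (fst a, f (snd a)) (fst b, f (snd b)) \<le> tcost Y e T (map (\<lambda>u. (fst u, f (snd u))) zs)"
    by (rule Y.qd_le)
  also have "\<dots> \<le> tcost X d S zs" using tcost_map zs unfolding X.chain_def by blast
  finally show "qd Y e T (fst a, f (snd a)) (fst b, f (snd b)) \<le> tcost X d S zs" .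
qed

lemma tmap_short:
  assumes A: "A \<in> tensor X S" and B: "B \<in> tensor X S"
  shows "tensor_dist Y e T (tensor_map Y T f A) (tensor_map Y T f B) \<le> tensor_dist X d S A B"
proof -
  obtain a b where ab: "a \<in> NN \<times> X" "b \<in> NN \<times> X" "A = tclass X S a" "B = tclass X S b"
    using X.tensor_cases A B by metis
  show ?thesis using ab tmap_class X.td_rep Y.td_rep gm_NN qd_mono by simp
qed

lemma tmap_S:
  assumes p: "p \<in> M0"
  shows "tensor_map Y T f (tensor_S X S p) = tensor_S Y T p"
proof -
  obtain n q where A: "n \<in> NN" "q \<in> M0" "real_of_int (fst n) + fst q = 3 * fst p"
     "real_of_int (snd n) + snd q = 3 * snd p" "tensor_S X S p = tclass X S (n, S q)"
    using X.tS_get[OF p] by blast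
  have "tensor_map Y T f (tensor_S X S p) = tclass Y T (n, T q)"
    using A tmap_class X.SX fS by simp
  also have "\<dots> = tensor_S Y T p" using Y.tS_rep[OF p A(1) A(2) A(3) A(4)] by simp
  finally show ?thesis .
qed

lemma tmor: "sqms_mor (tensor X S) (tensor_dist X d S) (tensor_S X S)
     (tensor Y T) (tensor_dist Y e T) (tensor_S Y T) (tensor_map Y T f)"
  unfolding sqms_mor_def using tmap_in tmap_short tmap_S by blast

end




theorem mainTheorem11:
  shows "(\<forall>(X :: 'a set) d S. square_ms X d S \<longrightarrow>
            Metric_space (tensor X S) (tensor_dist X d S) \<and>
            square_ms (tensor X S) (tensor_dist X d S) (tensor_S X S)) \<and>
         (\<forall>(X :: 'a set) d S (Y :: 'b set) e T f.
            square_ms X d S \<and> square_ms Y e T \<and> sqms_mor X d S Y e T f \<longrightarrow>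
            sqms_mor (tensor X S) (tensor_dist X d S) (tensor_S X S)
                     (tensor Y T) (tensor_dist Y e T) (tensor_S Y T) (tensor_map Y T f)) \<and>
         (\<forall>(X :: 'a set) d S. square_ms X d S \<longrightarrow>
            (\<forall>A\<in>tensor X S. tensor_map X S id A = A)) \<and>
         (\<forall>(X :: 'a set) d S (Y :: 'b set) e T (Z :: 'c set) h U f g.
            square_ms X d S \<and> square_ms Y e T \<and> square_ms Z h U \<and>
            sqms_mor X d S Y e T f \<and> sqms_mor Y e T Z h U g \<longrightarrow>
            (\<forall>A\<in>tensor X S. tensor_map Z U (g \<circ> f) A = tensor_map Z U g (tensor_map Y T f A)))"
proof (intro conjI allI impI ballI)
  fix X :: "'a set" and d S assume "square_ms X d S"
  then have X: "sqms X d S" by (rule sqms.intro)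
  show "Metric_space (tensor X S) (tensor_dist X d S)" by (rule sqms.tensor_ms[OF X])
  show "square_ms (tensor X S) (tensor_dist X d S) (tensor_S X S)" by (rule sqms.tensor_sq[OF X])
next
  fix X :: "'a set" and d S and Y :: "'b set" and e T f
  assume h: "square_ms X d S \<and> square_ms Y e T \<and> sqms_mor X d S Y e T f"
  then have "sqms2 X d S Y e T f" by (intro sqms2.intro sqms.intro sqms2_axioms.intro) auto
  then show "sqms_mor (tensor X S) (tensor_dist X d S) (tensor_S X S)
                     (tensor Y T) (tensor_dist Y e T) (tensor_S Y T) (tensor_map Y T f)"
    by (rule sqms2.tmor)
next
  fix X :: "'a set" and d S A assume "square_ms X d S" "A \<in> tensor X S"
  then show "tensor_map X S id A = A" using sqms.tmap_id sqms.intro by blast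
next
  fix X :: "'a set" and d S and Y :: "'b set" and e T and Z :: "'c set" and h U f g A
  assume H: "square_ms X d S \<and> square_ms Y e T \<and> square_ms Z h U \<and>
            sqms_mor X d S Y e T f \<and> sqms_mor Y e T Z h U g" and A: "A \<in> tensor X S"
  have f2: "sqms2 X d S Y e T f" using H by (intro sqms2.intro sqms.intro sqms2_axioms.intro) auto
  have g2: "sqms2 Y e T Z h U g" using H by (intro sqms2.intro sqms.intro sqms2_axioms.intro) auto
  have Zs: "sqms Z h U" using H by (intro sqms.intro) auto
  have Xs: "sqms X d S" using H by (intro sqms.intro) auto
  obtain a where a: "a \<in> NN \<times> X" "A = tclass X S a" using sqms.tensor_cases[OF Xs A] by blast
  have F: "((fst u, (g \<circ> f) (snd u)), (fst v, (g \<circ> f) (snd v))) \<in> teq Z U"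
    if "(u, v) \<in> teq X S" for u v
    using sqms2.fmap_teq[OF g2 sqms2.fmap_teq[OF f2 that]] by simp
  have "tensor_map Z U (g \<circ> f) A = tclass Z U (fst a, g (f (snd a)))"
    using tmap_class_gen[where X = X and S = S and f = "g \<circ> f", OF Zs F a(1)] a(2) by simp
  also have "\<dots> = tensor_map Z U g (tclass Y T (fst a, f (snd a)))"
    using sqms2.tmap_class[OF g2 sqms2.gm_NN[OF f2 a(1)]] by simp
  also have "tclass Y T (fst a, f (snd a)) = tensor_map Y T f A"
    using sqms2.tmap_class[OF f2 a(1)] a(2) by simp
  finally show "tensor_map Z U (g \<circ> f) A = tensor_map Z U g (tensor_map Y T f A)" .
qed


end
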